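(* Let $n\ge1$ be an integer, let $\rho_{\mathrm{enc}}^{(n)}$ be the encrypted-cloning encoded state on qubits $A,S_1,N_1,\dots,S_n,N_n$ (defined in the context), let $\mathcal R_n=\{S_1,N_1,\dots,S_n,N_n\}$ and let $B\subseteq\mathcal R_n$. Then: (i) If $B$ misses one or more complete pairs $\{S_i,N_i\}$ (which necessarily happens if $|B|<n$), then $B$ is completely uninformative. (ii) If $B$ contains at least one qubit from each pair $\{S_i,N_i\}$ (so $|B|\ge n$), then: if $|B|>n$, $B$ is authorized; if $|B|=n$, let $p$ be the number of signal qubits $S_i$ in $B$; then $B$ is completely uninformative when $n$ is even, completely uninformative when $n$ is odd and $p$ is even, and partially informative when $n$ is odd and $p$ is odd. In the partially informative case the reduced state is $$\rho_B=\frac{1}{2^n}\Big(I^{\otimes n}+(-1)^{(n-1)/2}\,y\,Y^{\otimes n}\Big),$$ where $y=\bra{\psi}Y\ket{\psi}$.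
   Context: Pauli operators: $\sigma_0=I,\sigma_1=X,\sigma_2=Y,\sigma_3=Z$. An input qubit $A$ is prepared in an arbitrary pure state $\ket{\psi}_A$, with Bloch components $x=\bra\psi X\ket\psi$, $y=\bra\psi Y\ket\psi$, $z=\bra\psi Z\ket\psi$. For $i=1,\dots,n$, the signal qubit $S_i$ and noise qubit $N_i$ are prepared in the Bell state $\ket{\phi}_{S_iN_i}=\frac{1}{\sqrt2}(\ket{00}+\ket{11})$. Set $\alpha_0=1$, $\alpha_1=\alpha_3=i$, $\alpha_2=-i^{\,n+1}$, and define the unitary $U_{\mathrm{enc}}^{(n)}=\frac12\sum_{\mu=0}^3\alpha_\mu^{-1}\sigma_\mu^{(A)}\otimes\bigotimes_{i=1}^n\sigma_\mu^{(S_i)}$ (acting as identity on the $N_i$). The encoded state is $\ket{\Psi_{\mathrm{enc}}}=U_{\mathrm{enc}}^{(n)}\big[\ket{\psi}_A\otimes\bigotimes_{i=1}^n\ket{\phi}_{S_iN_i}\big]$ and $\rho_{\mathrm{enc}}^{(n)}=\ket{\Psi_{\mathrm{enc}}}\bra{\Psi_{\mathrm{enc}}}$. For $B\subseteq\mathcal R_n$, the reduced state $\rho_B(\psi)$ is obtained from $\rho_{\mathrm{enc}}^{(n)}$ by tracing out $A$ and all qubits of $\mathcal R_n\setminus B$; in $Y^{\otimes n}$ and $I^{\otimes n}$ the tensor factors act on the $n$ qubits of $B$. $B$ is completely uninformative if $\rho_B(\psi)$ is independent of $\ket\psi$, and partially informative if it is not authorized and $\rho_B(\psi)$ depends nontrivially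 on $\ket\psi$. $B$ is authorized if it contains one complete pair $\{S_j,N_j\}$ and at least one qubit from each of the remaining $n-1$ pairs (such subsets allow perfect recovery of $\ket\psi$). *)

theory Defs
  imports Complex_Main
begin

datatype qubit = QA | QS nat | QN nat

text \<open>Computational basis states of a set Q of qubits are subsets s of Q
  (the qubits in state 1). A vector on Q is a function nat set to complex,
  evaluated on subsets of Q.\<close>

definition Rn :: "nat \<Rightarrow> qubit set" where
  "Rn n = QS ` {1..n} \<union> QN ` {1..n}"

definition Qall :: "nat \<Rightarrow> qubit set" where
  "Qall n = insert QA (Rn n)"

text \<open>Pauli matrices: pauli 0 = I, 1 = X, 2 = Y, 3 = Z; entry (row a, column b),
  where False = |0>, True = |1>.\<close>
definition pauli :: "nat \<Rightarrow> bool \<Rightarrow> bool \<Rightarrow> complex" where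
  "pauli \<mu> a b =
     (if \<mu> = 0 then (if a = b then 1 else 0)
      else if \<mu> = 1 then (if a \<noteq> b then 1 else 0)
      else if \<mu> = 2 then (if a = b then 0 else if a then \<i> else - \<i>)
      else (if a = b then (if a then -1 else 1) else 0))"

definition pauli_prod :: "qubit set \<Rightarrow> (qubit \<Rightarrow> nat) \<Rightarrow> qubit set \<Rightarrow> qubit set \<Rightarrow> complex" where
  "pauli_prod Q f s t = (\<Prod>q\<in>Q. pauli (f q) (q \<in> s) (q \<in> t))"

definition alpha :: "nat \<Rightarrow> nat \<Rightarrow> complex" where
  "alpha n \<mu> = (if \<mu> = 0 then 1 else if \<mu> = 2 then - (\<i> ^ (n + 1)) else \<i>)"

definition U_enc :: "nat \<Rightarrow> qubit set \<Rightarrow> qubit set \<Rightarrow> complex" where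
  "U_enc n s t = (1/2) * (\<Sum>\<mu><4. inverse (alpha n \<mu>) *
      pauli_prod (Qall n) (\<lambda>q. case q of QN _ \<Rightarrow> 0 | _ \<Rightarrow> \<mu>) s t)"

text \<open>Input state |psi>_A given by amplitudes psi False (of |0>) and psi True (of |1>).\<close>
definition pure_qubit :: "(bool \<Rightarrow> complex) \<Rightarrow> bool" where
  "pure_qubit \<psi> \<longleftrightarrow> (cmod (\<psi> False))\<^sup>2 + (cmod (\<psi> True))\<^sup>2 = 1"

text \<open>|psi>_A (x) (x)_i |phi>_{S_i N_i}, phi = (|00>+|11>)/sqrt 2.\<close>
definition init_state :: "nat \<Rightarrow> (bool \<Rightarrow> complex) \<Rightarrow> qubit set \<Rightarrow> complex" where
  "init_state n \<psi> s = \<psi> (QA \<in> s) *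
     (\<Prod>i\<in>{1..n}. if (QS i \<in> s) = (QN i \<in> s) then complex_of_real (1 / sqrt 2) else 0)"

definition enc_state :: "nat \<Rightarrow> (bool \<Rightarrow> complex) \<Rightarrow> qubit set \<Rightarrow> complex" where
  "enc_state n \<psi> s = (\<Sum>t\<in>Pow (Qall n). U_enc n s t * init_state n \<psi> t)"

text \<open>Reduced state rho_B(psi): partial trace of |Psi_enc><Psi_enc| over A and R_n - B.
  Entries indexed by b, b' subsets of B.\<close>
definition rho_B :: "nat \<Rightarrow> qubit set \<Rightarrow> (bool \<Rightarrow> complex) \<Rightarrow> qubit set \<Rightarrow> qubit set \<Rightarrow> complex" where
  "rho_B n B \<psi> b b' = (\<Sum>c\<in>Pow (Qall n - B). enc_state n \<psi> (b \<union> c) * cnj (enc_state n \<psi> (b' \<union> c)))"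

definition uninformative :: "nat \<Rightarrow> qubit set \<Rightarrow> bool" where
  "uninformative n B \<longleftrightarrow> (\<forall>\<psi>1 \<psi>2. pure_qubit \<psi>1 \<longrightarrow> pure_qubit \<psi>2 \<longrightarrow>
      (\<forall>b\<subseteq>B. \<forall>b'\<subseteq>B. rho_B n B \<psi>1 b b' = rho_B n B \<psi>2 b b'))"

definition authorized :: "nat \<Rightarrow> qubit set \<Rightarrow> bool" where
  "authorized n B \<longleftrightarrow> (\<exists>j\<in>{1..n}. QS j \<in> B \<and> QN j \<in> B \<and>
      (\<forall>i\<in>{1..n} - {j}. QS i \<in> B \<or> QN i \<in> B))"

definition partially_informative :: "nat \<Rightarrow> qubit set \<Rightarrow> bool" where
  "partially_informative n B \<longleftrightarrow> \<not> authorized n B \<and> \<not> uninformative n B"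

definition bloch_y :: "(bool \<Rightarrow> complex) \<Rightarrow> complex" where
  "bloch_y \<psi> = (\<Sum>a\<in>UNIV. \<Sum>b\<in>UNIV. cnj (\<psi> a) * pauli 2 a b * \<psi> b)"

end

theory Submission
  imports Defs
begin


definition sg :: "bool \<Rightarrow> complex" where "sg x = (if x then -1 else 1)"
definition sk :: "nat \<Rightarrow> qubit set \<Rightarrow> complex" where
  "sk n s = (\<Prod>i\<in>{1..n}. sg (QS i \<in> s))"
definition evp :: "nat \<Rightarrow> qubit set \<Rightarrow> bool" where
  "evp n s \<longleftrightarrow> (\<forall>i\<in>{1..n}. (QS i \<in> s) = (QN i \<in> s))"
definition odp :: "nat \<Rightarrow> qubit set \<Rightarrow> bool" where
  "odp n s \<longleftrightarrow> (\<forall>i\<in>{1..n}. (QS i \<in> s) = (QN i \<notin> s))"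
definition rr :: complex where "rr = complex_of_real (1 / sqrt 2)"

definition EE :: "nat \<Rightarrow> (bool \<Rightarrow> complex) \<Rightarrow> qubit set \<Rightarrow> complex" where
  "EE n \<psi> s = (1/2) * rr ^ n *
     ((if evp n s then \<psi> (QA \<in> s) * (1 - \<i> * sg (QA \<in> s) * sk n s) else 0)
    + (if odp n s then \<psi> (QA \<notin> s) * ((-1) ^ n * sg (QA \<in> s) * sk n s - \<i>) else 0))"

lemma pauli_nz: "pauli \<mu> a b \<noteq> 0 \<Longrightarrow> b = (a \<noteq> (\<mu> = 1 \<or> \<mu> = 2))"
  by (auto simp: pauli_def split: if_splits)

lemma pp_delta:
  assumes "finite Q"
  shows "(\<Sum>t\<in>Pow Q. pauli_prod Q f s t * g t)
     = pauli_prod Q f s {q\<in>Q. (q \<in> s) \<noteq> (f q = 1 \<or> f q = 2)} * g {q\<in>Q. (q \<in> s) \<noteq> (f q = 1 \<or> f q = 2)}"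
proof -
  let ?T = "{q\<in>Q. (q \<in> s) \<noteq> (f q = 1 \<or> f q = 2)}"
  have T: "?T \<in> Pow Q" by auto
  have z: "pauli_prod Q f s t * g t = 0" if "t \<in> Pow Q - {?T}" for t
  proof -
    from that obtain q where q: "q \<in> Q" "(q \<in> t) \<noteq> (q \<in> ?T)" by blast
    hence "pauli (f q) (q \<in> s) (q \<in> t) = 0" using pauli_nz[of "f q" "q \<in> s" "q \<in> t"] by auto
    hence "pauli_prod Q f s t = 0" unfolding pauli_prod_def using q(1) assms
      by (metis (no_types, lifting) prod_zero)
    thus ?thesis by simp
  qed
  show ?thesis
    using sum.remove[OF _ T, of "\<lambda>t. pauli_prod Q f s t * g t"] assms z
    by (simp add: sum.neutral)
qed

definition pdiag :: "nat \<Rightarrow> bool \<Rightarrow> complex" where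
  "pdiag \<mu> x = pauli \<mu> x (x \<noteq> (\<mu> = 1 \<or> \<mu> = 2))"

lemma pp_T:
  "pauli_prod Q f s {q\<in>Q. (q \<in> s) \<noteq> (f q = 1 \<or> f q = 2)} = (\<Prod>q\<in>Q. pdiag (f q) (q \<in> s))"
  unfolding pauli_prod_def pdiag_def by (rule prod.cong) auto

lemma Qall_eq: "Qall n = insert QA (QS ` {1..n} \<union> QN ` {1..n})"
  by (simp add: Qall_def Rn_def)

lemma finite_Qall[simp]: "finite (Qall n)" by (simp add: Qall_eq)

lemma prod_Qall:
  "(\<Prod>q\<in>Qall n. h q) = h QA * (\<Prod>i\<in>{1..n}. h (QS i)) * (\<Prod>i\<in>{1..n}. h (QN i))"
proof -
  have d: "QS ` {1..n} \<inter> QN ` {1..n} = {}" by auto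
  have "(\<Prod>q\<in>Qall n. h q) = h QA * (\<Prod>q\<in>QS ` {1..n} \<union> QN ` {1..n}. h q)"
    unfolding Qall_eq by (subst prod.insert) auto
  also have "\<dots> = h QA * ((\<Prod>q\<in>QS ` {1..n}. h q) * (\<Prod>q\<in>QN ` {1..n}. h q))"
    by (subst prod.union_disjoint) (use d in auto)
  also have "\<dots> = h QA * (\<Prod>i\<in>{1..n}. h (QS i)) * (\<Prod>i\<in>{1..n}. h (QN i))"
    by (simp add: prod.reindex inj_on_def mult.assoc)
  finally show ?thesis .
qed

definition fmu :: "nat \<Rightarrow> qubit \<Rightarrow> nat" where
  "fmu \<mu> q = (case q of QN _ \<Rightarrow> 0 | _ \<Rightarrow> \<mu>)"

lemma prod_if_zero:
  assumes "finite I"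
  shows "(\<Prod>i\<in>I. if P i then r else 0) = (if (\<forall>i\<in>I. P i) then r ^ card I else (0::complex))"
proof (cases "\<forall>i\<in>I. P i")
  case True thus ?thesis by (simp add: prod_constant cong: prod.cong)
next
  case False thus ?thesis using assms by (auto intro: prod_zero)
qed

lemma init_T:
  "init_state n \<psi> {q\<in>Qall n. (q \<in> s) \<noteq> (fmu \<mu> q = 1 \<or> fmu \<mu> q = 2)}
   = (if \<mu> = 1 \<or> \<mu> = 2 then \<psi> (QA \<notin> s) * (if odp n s then rr ^ n else 0)
      else \<psi> (QA \<in> s) * (if evp n s then rr ^ n else 0))"
  unfolding init_state_def rr_def[symmetric]
  by (subst prod_if_zero, simp)
     (cases "n = 0"; auto simp: Qall_eq fmu_def odp_def evp_def)

lemma enc_sum: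
  "enc_state n \<psi> s = (1/2) * (\<Sum>\<mu><4. inverse (alpha n \<mu>) *
      (\<Prod>q\<in>Qall n. pdiag (fmu \<mu> q) (q \<in> s)) *
      init_state n \<psi> {q\<in>Qall n. (q \<in> s) \<noteq> (fmu \<mu> q = 1 \<or> fmu \<mu> q = 2)})"
proof -
  have "enc_state n \<psi> s = (\<Sum>t\<in>Pow (Qall n). (1/2) * (\<Sum>\<mu><4. inverse (alpha n \<mu>) *
      (pauli_prod (Qall n) (fmu \<mu>) s t * init_state n \<psi> t)))"
    unfolding enc_state_def U_enc_def fmu_def
    by (simp add: sum_distrib_right mult.assoc)
  also have "\<dots> = (1/2) * (\<Sum>\<mu><4. inverse (alpha n \<mu>) *
      (\<Sum>t\<in>Pow (Qall n). pauli_prod (Qall n) (fmu \<mu>) s t * init_state n \<psi> t))"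
    by (simp add: sum_distrib_left sum.swap[of _ "Pow (Qall n)"])
  also have "\<dots> = (1/2) * (\<Sum>\<mu><4. inverse (alpha n \<mu>) *
      (\<Prod>q\<in>Qall n. pdiag (fmu \<mu> q) (q \<in> s)) *
      init_state n \<psi> {q\<in>Qall n. (q \<in> s) \<noteq> (fmu \<mu> q = 1 \<or> fmu \<mu> q = 2)})"
    by (simp only: pp_delta[OF finite_Qall] pp_T mult.assoc)
  finally show ?thesis .
qed

lemma pdiag_simps: "pdiag 0 x = 1" "pdiag (Suc 0) x = 1" "pdiag 2 x = - \<i> * sg x" "pdiag 3 x = sg x"
  by (auto simp: pdiag_def pauli_def sg_def)

lemma prodP:
  "(\<Prod>q\<in>Qall n. pdiag (fmu \<mu> q) (q \<in> s)) =
     pdiag \<mu> (QA \<in> s) * (\<Prod>i\<in>{1..n}. pdiag \<mu> (QS i \<in> s))"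
  by (simp add: prod_Qall fmu_def pdiag_simps)

lemma enc_closed: "enc_state n \<psi> s = EE n \<psi> s"
proof -
  have s4: "(\<Sum>\<mu><4. F \<mu>) = F 0 + F 1 + F 2 + F 3" for F :: "nat \<Rightarrow> complex"
    by (simp add: eval_nat_numeral)
  have p2: "(\<Prod>i\<in>{1..n}. pdiag 2 (QS i \<in> s)) = (- \<i>) ^ n * sk n s"
  proof -
    have "(\<Prod>i\<in>{1..n}. pdiag 2 (QS i \<in> s)) = (\<Prod>i\<in>{1..n}. (- \<i>) * sg (QS i \<in> s))"
      by (simp add: pdiag_simps)
    also have "\<dots> = (- \<i>) ^ n * sk n s"
      by (simp only: prod.distrib sk_def prod_constant card_atLeastAtMost) simp
    finally show ?thesis .
  qed
  have p3: "(\<Prod>i\<in>{1..n}. pdiag 3 (QS i \<in> s)) = sk n s"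
    by (simp add: pdiag_simps sk_def)
  have inv2: "inverse (alpha n 2) = - ((- \<i>) ^ (n+1))"
    by (simp add: alpha_def power_inverse[symmetric] inverse_minus_eq)
  have ii: "(- \<i>) ^ (n+1) * (- \<i>) ^ (n+1) = (-1::complex) ^ (n+1)"
    by (subst power_mult_distrib[symmetric]) simp
  have ii2: "- ((- \<i>) ^ (n+1) * ((- \<i>) ^ (n+1) * X)) = (-1::complex) ^ n * X" for X
    by (simp only: mult.assoc[symmetric] ii) simp
  have ii3: "inverse (\<i> ^ n) * (- \<i>) ^ n = (-1::complex) ^ n"
  proof -
    have "inverse (\<i> ^ n) = (- \<i>) ^ n" by (simp add: power_inverse[symmetric])
    hence "inverse (\<i> ^ n) * (- \<i>) ^ n = ((- \<i>) * (- \<i>)) ^ n"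
      by (simp only: power_mult_distrib)
    thus ?thesis by simp
  qed
  show ?thesis
    unfolding enc_sum s4 init_T prodP p2 p3
    apply (simp add: inv2 alpha_def pdiag_simps EE_def)
    apply (simp add: algebra_simps ii2 ii3)
    done
qed



definition FF :: "complex \<Rightarrow> (bool \<Rightarrow> complex) \<Rightarrow> bool \<Rightarrow> bool \<Rightarrow> bool \<Rightarrow> complex \<Rightarrow> complex" where
  "FF N \<psi> e od a u = (if e then \<psi> a * (1 - \<i> * sg a * u) else 0)
    + (if od then \<psi> (\<not> a) * (N * sg a * u - \<i>) else 0)"

lemma neg1_pow: "(-1::complex) ^ n = 1 \<or> (-1::complex) ^ n = -1"
  by (cases "even n") auto

lemma key_i:
  fixes u u' N :: complex
  assumes u: "u = 1 \<or> u = -1" and u': "u' = 1 \<or> u' = -1" and N: "N = 1 \<or> N = -1"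
    and c1: "\<not> (e \<and> od)" and c2: "\<not> (e \<and> od')" and c3: "\<not> (od \<and> e')"
    and pure: "\<psi> False * cnj (\<psi> False) + \<psi> True * cnj (\<psi> True) = 1"
  shows "FF N \<psi> e od a u * cnj (FF N \<psi> e' od' a u') + FF N \<psi> e od (\<not> a) u * cnj (FF N \<psi> e' od' (\<not> a) u')
    + FF N \<psi> e od a (- u) * cnj (FF N \<psi> e' od' a (- u')) + FF N \<psi> e od (\<not> a) (- u) * cnj (FF N \<psi> e' od' (\<not> a) (- u'))
    = 2 * (1 + u * u') * (if e \<and> e' \<or> od \<and> od' then 1 else 0)"
  using u u' N c1 c2 c3
  apply (cases a; cases e; cases od; cases e'; cases od')
  apply (auto simp: FF_def sg_def)
  apply (use pure i_squared in algebra)+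
  done



lemma EE_FF: "EE n \<psi> s = (1/2) * rr ^ n * FF ((-1)^n) \<psi> (evp n s) (odp n s) (QA \<in> s) (sk n s)"
  by (simp add: EE_def FF_def)

lemma sg_neg: "sg (\<not> x) = - sg x" by (simp add: sg_def)
lemma sg_sq: "sg x * sg x = 1" by (simp add: sg_def)

lemma sk_sq: "sk n s * sk n s = 1"
  by (simp add: sk_def prod.distrib[symmetric] sg_sq)

lemma pm1: "(x::complex) * x = 1 \<Longrightarrow> x = 1 \<or> x = -1"
  by (metis square_eq_1_iff power2_eq_square)

lemma sk_pm: "sk n s = 1 \<or> sk n s = -1" using pm1 sk_sq by blast

lemma cnj_rr: "cnj rr = rr" by (simp add: rr_def)
lemma rr_sq: "rr * rr = 1/2"
  by (simp add: rr_def of_real_mult[symmetric] del: of_real_mult)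

lemma rrn: "rr ^ n * rr ^ n = (1/2) ^ n"
  by (simp add: power_mult_distrib[symmetric] rr_sq)

lemma EE_mult: "EE n \<psi> s * cnj (EE n \<psi> s') =
   (1/4) * (1/2) ^ n * (FF ((-1)^n) \<psi> (evp n s) (odp n s) (QA \<in> s) (sk n s) *
     cnj (FF ((-1)^n) \<psi> (evp n s') (odp n s') (QA \<in> s') (sk n s')))"
proof -
  have "EE n \<psi> s * cnj (EE n \<psi> s') = (1/4) * (rr ^ n * rr ^ n) * (FF ((-1)^n) \<psi> (evp n s) (odp n s) (QA \<in> s) (sk n s) *
     cnj (FF ((-1)^n) \<psi> (evp n s') (odp n s') (QA \<in> s') (sk n s')))"
    by (simp add: EE_FF cnj_rr)
  thus ?thesis by (simp add: rrn)
qed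

definition tog :: "qubit set \<Rightarrow> qubit set \<Rightarrow> qubit set" where
  "tog X s = {q. (q \<in> s) \<noteq> (q \<in> X)}"

lemma tog_mem[simp]: "q \<in> tog X s \<longleftrightarrow> (q \<in> s) \<noteq> (q \<in> X)" by (simp add: tog_def)
lemma tog_tog[simp]: "tog X (tog X s) = s" by auto
lemma tog_Pow: "X \<subseteq> C \<Longrightarrow> c \<in> Pow C \<Longrightarrow> tog X c \<in> Pow C" by auto
lemma tog_Un: "b \<inter> X = {} \<Longrightarrow> b \<union> tog X c = tog X (b \<union> c)" by auto

lemma sum_tog:
  assumes "X \<subseteq> C"
  shows "(\<Sum>c\<in>Pow C. h (tog X c)) = (\<Sum>c\<in>Pow C. h c)"
  by (rule sum.reindex_bij_witness[of _ "tog X" "tog X"]) (use assms in auto)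

lemma evp_togA: "evp n (tog {QA} s) = evp n s" by (simp add: evp_def)
lemma odp_togA: "odp n (tog {QA} s) = odp n s" by (simp add: odp_def)
lemma sk_togA: "sk n (tog {QA} s) = sk n s" by (simp add: sk_def)

lemma evp_togJ: "evp n (tog {QS j, QN j} s) = evp n s" by (auto simp: evp_def)
lemma odp_togJ: "odp n (tog {QS j, QN j} s) = odp n s" by (auto simp: odp_def)
lemma QA_togJ: "QA \<in> tog {QS j, QN j} s \<longleftrightarrow> QA \<in> s" by simp
lemma sk_togJ:
  assumes "j \<in> {1..n}"
  shows "sk n (tog {QS j, QN j} s) = - sk n s"
proof -
  have "sk n (tog {QS j, QN j} s) = sg (QS j \<notin> s) * (\<Prod>i\<in>{1..n} - {j}. sg (QS i \<in> tog {QS j, QN j} s))"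
    unfolding sk_def using assms by (subst prod.remove) auto
  also have "(\<Prod>i\<in>{1..n} - {j}. sg (QS i \<in> tog {QS j, QN j} s)) = (\<Prod>i\<in>{1..n} - {j}. sg (QS i \<in> s))"
    by (rule prod.cong) auto
  also have "sk n s = sg (QS j \<in> s) * (\<Prod>i\<in>{1..n} - {j}. sg (QS i \<in> s))"
    unfolding sk_def using assms by (subst prod.remove) auto
  ultimately show ?thesis by (simp add: sg_neg)
qed

lemma pure_eq: "pure_qubit \<psi> \<Longrightarrow> \<psi> False * cnj (\<psi> False) + \<psi> True * cnj (\<psi> True) = 1"
  unfolding pure_qubit_def
  by (metis complex_norm_square of_real_1 of_real_add)

definition GG :: "nat \<Rightarrow> qubit set \<Rightarrow> qubit set \<Rightarrow> complex" where
  "GG n s s' = (1/4) * (1/2) ^ n * (2 * (1 + sk n s * sk n s') *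
      (if evp n s \<and> evp n s' \<or> odp n s \<and> odp n s' then 1 else 0))"

lemma part_i:
  assumes n: "n \<ge> 1" and B: "B \<subseteq> Rn n" and j: "j \<in> {1..n}" "QS j \<notin> B" "QN j \<notin> B"
    and psi: "pure_qubit \<psi>" and b: "b \<subseteq> B" and b': "b' \<subseteq> B"
  shows "rho_B n B \<psi> b b' = (1/4) * (\<Sum>c\<in>Pow (Qall n - B). GG n (b \<union> c) (b' \<union> c))"
proof -
  define C where "C = Qall n - B"
  define h where "h c = EE n \<psi> (b \<union> c) * cnj (EE n \<psi> (b' \<union> c))" for c
  define tA where "tA = tog {QA}"
  define tJ where "tJ = tog {QS j, QN j}"
  have QAB: "QA \<notin> B" using B by (auto simp: Rn_def)
  have XA: "{QA} \<subseteq> C" using QAB by (simp add: C_def Qall_def)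
  have XJ: "{QS j, QN j} \<subseteq> C" using j by (auto simp: C_def Qall_def Rn_def)
  have rho: "rho_B n B \<psi> b b' = (\<Sum>c\<in>Pow C. h c)"
    by (simp add: rho_B_def C_def h_def enc_closed)
  have s1: "(\<Sum>c\<in>Pow C. h (tA c)) = (\<Sum>c\<in>Pow C. h c)" unfolding tA_def by (rule sum_tog[OF XA])
  have s2: "(\<Sum>c\<in>Pow C. h (tJ c)) = (\<Sum>c\<in>Pow C. h c)" unfolding tJ_def by (rule sum_tog[OF XJ])
  have s3: "(\<Sum>c\<in>Pow C. h (tA (tJ c))) = (\<Sum>c\<in>Pow C. h c)"
  proof -
    have "(\<Sum>c\<in>Pow C. h (tA (tJ c))) = (\<Sum>c\<in>Pow C. (\<lambda>c. h (tA c)) c)"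
      unfolding tJ_def by (rule sum_tog[OF XJ, of "\<lambda>c. h (tA c)"])
    thus ?thesis using s1 by simp
  qed
  have pt: "h c + h (tA c) + h (tJ c) + h (tA (tJ c)) = GG n (b \<union> c) (b' \<union> c)" if c: "c \<in> Pow C" for c
  proof -
    define s where "s = b \<union> c"
    define s' where "s' = b' \<union> c"
    have dA: "b \<inter> {QA} = {}" "b' \<inter> {QA} = {}" using b b' QAB by auto
    have dJ: "b \<inter> {QS j, QN j} = {}" "b' \<inter> {QS j, QN j} = {}" using b b' j by auto
    have e1: "b \<union> tA c = tA s" "b' \<union> tA c = tA s'" unfolding tA_def s_def s'_def using tog_Un dA by auto
    have e2: "b \<union> tJ c = tJ s" "b' \<union> tJ c = tJ s'" unfolding tJ_def s_def s'_def using tog_Un dJ by auto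
    have e3: "b \<union> tA (tJ c) = tA (tJ s)" "b' \<union> tA (tJ c) = tA (tJ s')"
      unfolding tA_def tJ_def s_def s'_def using tog_Un dA dJ by (metis)+
    have qa: "(QA \<in> s') = (QA \<in> s)" using b b' QAB by (auto simp: s_def s'_def)
    have c1: "\<not> (evp n s \<and> odp n s)" using j by (auto simp: evp_def odp_def)
    have agree: "(QS j \<in> s') = (QS j \<in> s)" "(QN j \<in> s') = (QN j \<in> s)"
      using b b' j by (auto simp: s_def s'_def)
    have c2: "\<not> (evp n s \<and> odp n s')" using j agree by (auto simp: evp_def odp_def)
    have c3: "\<not> (odp n s \<and> evp n s')" using j agree by (auto simp: evp_def odp_def)
    have QAtA: "QA \<in> tog {QA} x \<longleftrightarrow> \<not> (QA \<in> x)" for x by simp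
    have QAtJ: "QA \<in> tog {QS j, QN j} x \<longleftrightarrow> (QA \<in> x)" for x by simp
    have "h c + h (tA c) + h (tJ c) + h (tA (tJ c)) =
      (1/4) * (1/2) ^ n * (
      FF ((-1)^n) \<psi> (evp n s) (odp n s) (QA \<in> s) (sk n s) * cnj (FF ((-1)^n) \<psi> (evp n s') (odp n s') (QA \<in> s) (sk n s'))
    + FF ((-1)^n) \<psi> (evp n s) (odp n s) (\<not> QA \<in> s) (sk n s) * cnj (FF ((-1)^n) \<psi> (evp n s') (odp n s') (\<not> QA \<in> s) (sk n s'))
    + FF ((-1)^n) \<psi> (evp n s) (odp n s) (QA \<in> s) (- sk n s) * cnj (FF ((-1)^n) \<psi> (evp n s') (odp n s') (QA \<in> s) (- sk n s'))
    + FF ((-1)^n) \<psi> (evp n s) (odp n s) (\<not> QA \<in> s) (- sk n s) * cnj (FF ((-1)^n) \<psi> (evp n s') (odp n s') (\<not> QA \<in> s) (- sk n s')))"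
      unfolding h_def e1 e2 e3 EE_mult s_def[symmetric] s'_def[symmetric]
      by (simp add: tA_def tJ_def QAtA QAtJ evp_togA odp_togA sk_togA evp_togJ odp_togJ sk_togJ[OF j(1)] qa
          distrib_left del: tog_mem)
    also have "\<dots> = GG n s s'"
      unfolding GG_def
      by (subst key_i[OF sk_pm sk_pm neg1_pow c1 c2 c3 pure_eq[OF psi]]) simp
    finally show ?thesis by (simp add: s_def s'_def)
  qed
  have "4 * rho_B n B \<psi> b b' = (\<Sum>c\<in>Pow C. h c + h (tA c) + h (tJ c) + h (tA (tJ c)))"
    by (simp add: rho sum.distrib s1 s2 s3)
  also have "\<dots> = (\<Sum>c\<in>Pow C. GG n (b \<union> c) (b' \<union> c))"
    by (rule sum.cong) (auto simp: pt)
  finally show ?thesis by (simp add: C_def mult.commute)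
qed



fun partner :: "qubit \<Rightarrow> qubit" where
  "partner QA = QA" | "partner (QS i) = QN i" | "partner (QN i) = QS i"

definition opp :: "nat \<Rightarrow> qubit set \<Rightarrow> bool" where
  "opp n B \<longleftrightarrow> B \<subseteq> Rn n \<and> (\<forall>i\<in>{1..n}. (QS i \<in> B) = (QN i \<notin> B))"

definition c0 :: "nat \<Rightarrow> qubit set \<Rightarrow> qubit set \<Rightarrow> qubit set" where
  "c0 n B b = {q \<in> Qall n - B. q \<noteq> QA \<and> partner q \<in> b}"
definition c1 :: "nat \<Rightarrow> qubit set \<Rightarrow> qubit set \<Rightarrow> qubit set" where
  "c1 n B b = {q \<in> Qall n - B. q \<noteq> QA \<and> partner q \<notin> b}"

lemma Qall_cases: "q \<in> Qall n \<Longrightarrow> q = QA \<or> (\<exists>i\<in>{1..n}. q = QS i \<or> q = QN i)"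
  by (auto simp: Qall_def Rn_def)

lemma QS_Qall: "i \<in> {1..n} \<Longrightarrow> QS i \<in> Qall n" and QN_Qall: "i \<in> {1..n} \<Longrightarrow> QN i \<in> Qall n"
  by (auto simp: Qall_def Rn_def)

lemma evp_iff_pt:
  assumes "opp n B" "b \<subseteq> B" "c \<subseteq> Qall n - B"
  shows "evp n (b \<union> c) \<longleftrightarrow> (\<forall>q\<in>Qall n - B - {QA}. q \<in> c \<longleftrightarrow> partner q \<in> b)"
proof
  assume ev: "evp n (b \<union> c)"
  show "\<forall>q\<in>Qall n - B - {QA}. q \<in> c \<longleftrightarrow> partner q \<in> b"
  proof
    fix q assume q: "q \<in> Qall n - B - {QA}"
    then obtain i where i: "i \<in> {1..n}" "q = QS i \<or> q = QN i" using Qall_cases by blast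
    have e: "(QS i \<in> b \<union> c) = (QN i \<in> b \<union> c)" using ev i unfolding evp_def by blast
    from i(2) show "q \<in> c \<longleftrightarrow> partner q \<in> b"
    proof
      assume qs: "q = QS i"
      have "QN i \<in> B" using assms(1) i q qs unfolding opp_def by auto
      moreover have "QS i \<notin> B" using q qs by auto
      ultimately show ?thesis using e qs assms(2,3) by auto
    next
      assume qs: "q = QN i"
      have "QS i \<in> B" using assms(1) i q qs unfolding opp_def by auto
      moreover have "QN i \<notin> B" using q qs by auto
      ultimately show ?thesis using e qs assms(2,3) by auto
    qed
  qed
next
  assume pt: "\<forall>q\<in>Qall n - B - {QA}. q \<in> c \<longleftrightarrow> partner q \<in> b"
  show "evp n (b \<union> c)" unfolding evp_def
  proof
    fix i assume i: "i \<in> {1..n}"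
    show "(QS i \<in> b \<union> c) = (QN i \<in> b \<union> c)"
    proof (cases "QS i \<in> B")
      case True
      hence "QN i \<notin> B" using assms(1) i unfolding opp_def by auto
      hence "QN i \<in> c \<longleftrightarrow> QS i \<in> b" using pt QN_Qall[OF i] by auto
      thus ?thesis using True \<open>QN i \<notin> B\<close> assms(2,3) by auto
    next
      case False
      hence "QN i \<in> B" using assms(1) i unfolding opp_def by auto
      have "QS i \<in> c \<longleftrightarrow> QN i \<in> b" using pt QS_Qall[OF i] False by auto
      thus ?thesis using False \<open>QN i \<in> B\<close> assms(2,3) by auto
    qed
  qed
qed

lemma odp_iff_pt:
  assumes "opp n B" "b \<subseteq> B" "c \<subseteq> Qall n - B"
  shows "odp n (b \<union> c) \<longleftrightarrow> (\<forall>q\<in>Qall n - B - {QA}. q \<in> c \<longleftrightarrow> partner q \<notin> b)"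
proof
  assume ev: "odp n (b \<union> c)"
  show "\<forall>q\<in>Qall n - B - {QA}. q \<in> c \<longleftrightarrow> partner q \<notin> b"
  proof
    fix q assume q: "q \<in> Qall n - B - {QA}"
    then obtain i where i: "i \<in> {1..n}" "q = QS i \<or> q = QN i" using Qall_cases by blast
    have e: "(QS i \<in> b \<union> c) = (QN i \<notin> b \<union> c)" using ev i unfolding odp_def by blast
    from i(2) show "q \<in> c \<longleftrightarrow> partner q \<notin> b"
    proof
      assume qs: "q = QS i"
      have "QN i \<in> B" using assms(1) i q qs unfolding opp_def by auto
      moreover have "QS i \<notin> B" using q qs by auto
      ultimately show ?thesis using e qs assms(2,3) by auto
    next
      assume qs: "q = QN i"
      have "QS i \<in> B" using assms(1) i q qs unfolding opp_def by auto
      moreover have "QN i \<notin> B" using q qs by auto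
      ultimately show ?thesis using e qs assms(2,3) by auto
    qed
  qed
next
  assume pt: "\<forall>q\<in>Qall n - B - {QA}. q \<in> c \<longleftrightarrow> partner q \<notin> b"
  show "odp n (b \<union> c)" unfolding odp_def
  proof
    fix i assume i: "i \<in> {1..n}"
    show "(QS i \<in> b \<union> c) = (QN i \<notin> b \<union> c)"
    proof (cases "QS i \<in> B")
      case True
      hence "QN i \<notin> B" using assms(1) i unfolding opp_def by auto
      hence "QN i \<in> c \<longleftrightarrow> QS i \<notin> b" using pt QN_Qall[OF i] by auto
      thus ?thesis using True \<open>QN i \<notin> B\<close> assms(2,3) by auto
    next
      case False
      hence "QN i \<in> B" using assms(1) i unfolding opp_def by auto
      have "QS i \<in> c \<longleftrightarrow> QN i \<notin> b" using pt QS_Qall[OF i] False by auto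
      thus ?thesis using False \<open>QN i \<in> B\<close> assms(2,3) by auto
    qed
  qed
qed

lemma L1:
  assumes "opp n B" "b \<subseteq> B" "c \<subseteq> Qall n - B"
  shows "evp n (b \<union> c) \<longleftrightarrow> c - {QA} = c0 n B b"
  unfolding evp_iff_pt[OF assms] c0_def using assms(3) by blast

lemma L2:
  assumes "opp n B" "b \<subseteq> B" "c \<subseteq> Qall n - B"
  shows "odp n (b \<union> c) \<longleftrightarrow> c - {QA} = c1 n B b"
  unfolding odp_iff_pt[OF assms] c1_def using assms(3) by blast



lemma key_ii:
  fixes u N P :: complex
  assumes u: "u = 1 \<or> u = -1" and N: "N = 1 \<or> N = -1" and P: "P = 1 \<or> P = -1"
  shows "FF N \<psi> True False False u * cnj (FF N \<psi> False True False (u*P))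
    + FF N \<psi> True False True u * cnj (FF N \<psi> False True True (u*P))
    + FF N \<psi> False True False (u*N*P) * cnj (FF N \<psi> True False False (u*N*P*P))
    + FF N \<psi> False True True (u*N*P) * cnj (FF N \<psi> True False True (u*N*P*P))
    = (1 - N) * (1 - P) * u * (\<psi> False * cnj (\<psi> True) - \<psi> True * cnj (\<psi> False))"
  using u N P
  by (auto simp: FF_def sg_def algebra_simps)

lemma key_iii:
  fixes u v N :: complex
  assumes u: "u = 1 \<or> u = -1" and v: "v = 1 \<or> v = -1" and N: "N = 1 \<or> N = -1"
    and pure: "\<psi> False * cnj (\<psi> False) + \<psi> True * cnj (\<psi> True) = 1"
  shows "FF N \<psi> True False False u * cnj (FF N \<psi> True False False u)
    + FF N \<psi> True False True u * cnj (FF N \<psi> True False True u)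
    + FF N \<psi> False True False v * cnj (FF N \<psi> False True False v)
    + FF N \<psi> False True True v * cnj (FF N \<psi> False True True v) = 4"
  using u v N
  apply (auto simp: FF_def sg_def)
  apply (use pure i_squared in algebra)+
  done



lemma P1: "opp n B \<Longrightarrow> q \<in> B \<Longrightarrow> partner q \<in> Qall n - B \<and> partner q \<noteq> QA \<and> partner (partner q) = q"
  unfolding opp_def Rn_def Qall_def by (cases q) auto

lemma P2: "opp n B \<Longrightarrow> q \<in> Qall n - B \<Longrightarrow> q \<noteq> QA \<Longrightarrow> partner q \<in> B \<and> partner (partner q) = q"
  unfolding opp_def Rn_def Qall_def by (cases q) auto

lemma QA_notin: "opp n B \<Longrightarrow> QA \<notin> B" unfolding opp_def Rn_def by auto

lemma c0_mem: "opp n B \<Longrightarrow> q \<in> B \<Longrightarrow> partner q \<in> c0 n B b \<longleftrightarrow> q \<in> b"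
  unfolding c0_def using P1 by auto
lemma c1_mem: "opp n B \<Longrightarrow> q \<in> B \<Longrightarrow> partner q \<in> c1 n B b \<longleftrightarrow> q \<notin> b"
  unfolding c1_def using P1 by auto

lemma c0_sub: "c0 n B b \<subseteq> Qall n - B - {QA}" and c1_sub: "c1 n B b \<subseteq> Qall n - B - {QA}"
  unfolding c0_def c1_def by auto

lemma c0_eq: assumes "opp n B" "b \<subseteq> B" "b' \<subseteq> B"
  shows "c0 n B b = c0 n B b' \<longleftrightarrow> b = b'"
proof
  assume e: "c0 n B b = c0 n B b'"
  have "q \<in> b \<longleftrightarrow> q \<in> b'" if "q \<in> B" for q
    using c0_mem[OF assms(1) that, of b] c0_mem[OF assms(1) that, of b'] e by simp
  thus "b = b'" using assms by blast
qed simp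

lemma c1_eq: assumes "opp n B" "b \<subseteq> B" "b' \<subseteq> B"
  shows "c1 n B b = c1 n B b' \<longleftrightarrow> b = b'"
proof
  assume e: "c1 n B b = c1 n B b'"
  have "q \<in> b \<longleftrightarrow> q \<in> b'" if "q \<in> B" for q
    using c1_mem[OF assms(1) that, of b] c1_mem[OF assms(1) that, of b'] e by simp
  thus "b = b'" using assms by blast
qed simp

lemma c01_eq: assumes "opp n B" "b \<subseteq> B" "b' \<subseteq> B"
  shows "c0 n B b = c1 n B b' \<longleftrightarrow> b' = B - b"
proof
  assume e: "c0 n B b = c1 n B b'"
  have "q \<in> b \<longleftrightarrow> q \<notin> b'" if "q \<in> B" for q
    using c0_mem[OF assms(1) that, of b] c1_mem[OF assms(1) that, of b'] e by simp
  thus "b' = B - b" using assms by blast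
next
  assume e: "b' = B - b"
  show "c0 n B b = c1 n B b'"
  proof (rule set_eqI)
    fix q
    show "q \<in> c0 n B b \<longleftrightarrow> q \<in> c1 n B b'"
    proof (cases "q \<in> Qall n - B \<and> q \<noteq> QA")
      case True
      hence "partner q \<in> B" using P2[OF assms(1)] by blast
      thus ?thesis using True e unfolding c0_def c1_def by auto
    next
      case False thus ?thesis unfolding c0_def c1_def by auto
    qed
  qed
qed

lemma c10_eq: assumes "opp n B" "b \<subseteq> B" "b' \<subseteq> B"
  shows "c1 n B b = c0 n B b' \<longleftrightarrow> b' = B - b"
proof -
  have "c1 n B b = c0 n B b' \<longleftrightarrow> b = B - b'" using c01_eq[OF assms(1,3,2)] by auto
  also have "\<dots> \<longleftrightarrow> b' = B - b" using assms(2,3) by blast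
  finally show ?thesis .
qed

lemma B_ne: "opp n B \<Longrightarrow> n \<ge> 1 \<Longrightarrow> B \<noteq> {}"
  unfolding opp_def by (metis atLeastAtMost_iff empty_iff le_refl)

lemma c01_ne: assumes "opp n B" "n \<ge> 1" shows "c0 n B b \<noteq> c1 n B b"
proof -
  obtain q where q: "q \<in> B" using B_ne[OF assms] by blast
  show ?thesis using c0_mem[OF assms(1) q, of b] c1_mem[OF assms(1) q, of b] by auto
qed

lemma sk_insQA: "sk n (insert QA s) = sk n s" by (simp add: sk_def)

lemma sg_mult: "sg x * sg y = sg (x \<noteq> y)" by (simp add: sg_def)

lemma sk_mult: "sk n s * sk n s' = (\<Prod>i\<in>{1..n}. sg ((QS i \<in> s) \<noteq> (QS i \<in> s')))"
  by (simp add: sk_def prod.distrib[symmetric] sg_mult)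

lemma EE_zero: "\<not> evp n s \<Longrightarrow> \<not> odp n s \<Longrightarrow> EE n \<psi> s = 0"
  by (simp add: EE_def)

lemma sk_pm_mult: "u * u = (1::complex) \<Longrightarrow> u * u' = P \<Longrightarrow> u' = u * P"
  by (metis mult.assoc mult_1)



lemma opp_rho:
  assumes n: "n \<ge> 1" and op: "opp n B" and b: "b \<subseteq> B" and b': "b' \<subseteq> B"
  shows "rho_B n B \<psi> b b' = (1/4) * (1/2) ^ n * (
     FF ((-1)^n) \<psi> True False False (sk n (b \<union> c0 n B b)) *
       cnj (FF ((-1)^n) \<psi> (b' = b) (b' = B - b) False (sk n (b' \<union> c0 n B b)))
   + FF ((-1)^n) \<psi> True False True (sk n (b \<union> c0 n B b)) *
       cnj (FF ((-1)^n) \<psi> (b' = b) (b' = B - b) True (sk n (b' \<union> c0 n B b)))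
   + FF ((-1)^n) \<psi> False True False (sk n (b \<union> c1 n B b)) *
       cnj (FF ((-1)^n) \<psi> (b' = B - b) (b' = b) False (sk n (b' \<union> c1 n B b)))
   + FF ((-1)^n) \<psi> False True True (sk n (b \<union> c1 n B b)) *
       cnj (FF ((-1)^n) \<psi> (b' = B - b) (b' = b) True (sk n (b' \<union> c1 n B b))))"
proof -
  define C where "C = Qall n - B"
  define h where "h c = EE n \<psi> (b \<union> c) * cnj (EE n \<psi> (b' \<union> c))" for c
  define x0 where "x0 = c0 n B b"
  define x1 where "x1 = c1 n B b"
  define T where "T = {x0, insert QA x0, x1, insert QA x1}"
  have QAB: "QA \<notin> B" using QA_notin[OF op] .
  have QAC: "QA \<in> C" using QAB by (simp add: C_def Qall_def)
  have x0C: "x0 \<subseteq> C" "QA \<notin> x0" using c0_sub unfolding x0_def C_def by blast+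
  have x1C: "x1 \<subseteq> C" "QA \<notin> x1" using c1_sub unfolding x1_def C_def by blast+
  have ne: "x0 \<noteq> x1" using c01_ne[OF op n] unfolding x0_def x1_def .
  have rho: "rho_B n B \<psi> b b' = (\<Sum>c\<in>Pow C. h c)"
    by (simp add: rho_B_def C_def h_def enc_closed)
  have TP: "T \<subseteq> Pow C" using x0C x1C QAC unfolding T_def by auto
  have z: "\<forall>c\<in>Pow C - T. h c = 0"
  proof
    fix c assume c: "c \<in> Pow C - T"
    have cC: "c \<subseteq> Qall n - B" using c by (simp add: C_def)
    have "\<not> evp n (b \<union> c)"
    proof
      assume "evp n (b \<union> c)"
      hence "c - {QA} = x0" using L1[OF op b cC] x0_def by simp
      hence "c \<in> T" unfolding T_def using x0C by blast
      thus False using c by blast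
    qed
    moreover have "\<not> odp n (b \<union> c)"
    proof
      assume "odp n (b \<union> c)"
      hence "c - {QA} = x1" using L2[OF op b cC] x1_def by simp
      hence "c \<in> T" unfolding T_def using x1C by blast
      thus False using c by blast
    qed
    ultimately show "h c = 0" by (simp add: h_def EE_zero)
  qed
  have sumT: "(\<Sum>c\<in>Pow C. h c) = (\<Sum>c\<in>T. h c)"
    by (rule sum.mono_neutral_right[OF _ TP z]) (simp add: C_def)
  have sum4: "(\<Sum>c\<in>T. h c) = h x0 + h (insert QA x0) + h x1 + h (insert QA x1)"
  proof -
    have d1: "x0 \<noteq> insert QA x0" "x0 \<noteq> insert QA x1" "x1 \<noteq> insert QA x1" "insert QA x0 \<noteq> x1"
      using x0C(2) x1C(2) by auto
    have d2: "insert QA x0 \<noteq> insert QA x1" using ne x0C(2) x1C(2)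
      by (metis Diff_insert_absorb)
    show ?thesis unfolding T_def using d1 d2 ne by (simp add: add.assoc)
  qed
  have cx: "x0 \<subseteq> Qall n - B" "insert QA x0 \<subseteq> Qall n - B" "x1 \<subseteq> Qall n - B" "insert QA x1 \<subseteq> Qall n - B"
    using x0C x1C QAC unfolding C_def by auto
  have m: "x0 - {QA} = x0" "insert QA x0 - {QA} = x0" "x1 - {QA} = x1" "insert QA x1 - {QA} = x1"
    using x0C(2) x1C(2) by auto
  have L1': "evp n (b'' \<union> c) \<longleftrightarrow> c - {QA} = c0 n B b''" if "b'' \<subseteq> B" "c \<subseteq> Qall n - B" for b'' c
    using L1[OF op that] .
  have L2': "odp n (b'' \<union> c) \<longleftrightarrow> c - {QA} = c1 n B b''" if "b'' \<subseteq> B" "c \<subseteq> Qall n - B" for b'' c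
    using L2[OF op that] .
  have E0: "c0 n B b = x0" "c1 n B b = x1" by (simp_all add: x0_def x1_def)
  have E1: "x0 = c0 n B b' \<longleftrightarrow> b' = b" using c0_eq[OF op b b'] E0 by auto
  have E2: "x0 = c1 n B b' \<longleftrightarrow> b' = B - b" using c01_eq[OF op b b'] E0 by auto
  have E3: "x1 = c0 n B b' \<longleftrightarrow> b' = B - b" using c10_eq[OF op b b'] E0 by auto
  have E4: "x1 = c1 n B b' \<longleftrightarrow> b' = b" using c1_eq[OF op b b'] E0 by auto
  have ev: "evp n (b \<union> x0)" "evp n (b \<union> insert QA x0)" "\<not> evp n (b \<union> x1)" "\<not> evp n (b \<union> insert QA x1)"
    by (simp_all only: L1'[OF b cx(1)] L1'[OF b cx(2)] L1'[OF b cx(3)] L1'[OF b cx(4)] m E0) (use ne in auto)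
  have od: "\<not> odp n (b \<union> x0)" "\<not> odp n (b \<union> insert QA x0)" "odp n (b \<union> x1)" "odp n (b \<union> insert QA x1)"
    by (simp_all only: L2'[OF b cx(1)] L2'[OF b cx(2)] L2'[OF b cx(3)] L2'[OF b cx(4)] m E0) (use ne in auto)
  have ev': "evp n (b' \<union> x0) = (b' = b)" "evp n (b' \<union> insert QA x0) = (b' = b)"
      "evp n (b' \<union> x1) = (b' = B - b)" "evp n (b' \<union> insert QA x1) = (b' = B - b)"
    by (simp_all only: L1'[OF b' cx(1)] L1'[OF b' cx(2)] L1'[OF b' cx(3)] L1'[OF b' cx(4)] m E1 E3)
  have od': "odp n (b' \<union> x0) = (b' = B - b)" "odp n (b' \<union> insert QA x0) = (b' = B - b)"
      "odp n (b' \<union> x1) = (b' = b)" "odp n (b' \<union> insert QA x1) = (b' = b)"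
    by (simp_all only: L2'[OF b' cx(1)] L2'[OF b' cx(2)] L2'[OF b' cx(3)] L2'[OF b' cx(4)] m E2 E4)
  have qa: "QA \<notin> b \<union> x0" "QA \<notin> b' \<union> x0" "QA \<notin> b \<union> x1" "QA \<notin> b' \<union> x1"
    using b b' QAB x0C x1C by auto
  have ins: "b \<union> insert QA x = insert QA (b \<union> x)" "b' \<union> insert QA x = insert QA (b' \<union> x)" for x by auto
  have h1: "h x0 = (1/4) * (1/2) ^ n * (FF ((-1)^n) \<psi> True False False (sk n (b \<union> x0)) *
       cnj (FF ((-1)^n) \<psi> (b' = b) (b' = B - b) False (sk n (b' \<union> x0))))"
    unfolding h_def EE_mult using ev od ev' od' qa by simp
  have h2: "h (insert QA x0) = (1/4) * (1/2) ^ n * (FF ((-1)^n) \<psi> True False True (sk n (b \<union> x0)) *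
       cnj (FF ((-1)^n) \<psi> (b' = b) (b' = B - b) True (sk n (b' \<union> x0))))"
    unfolding h_def EE_mult ins sk_insQA using ev od ev' od' qa by (simp add: ins)
  have h3: "h x1 = (1/4) * (1/2) ^ n * (FF ((-1)^n) \<psi> False True False (sk n (b \<union> x1)) *
       cnj (FF ((-1)^n) \<psi> (b' = B - b) (b' = b) False (sk n (b' \<union> x1))))"
    unfolding h_def EE_mult using ev od ev' od' qa by simp
  have h4: "h (insert QA x1) = (1/4) * (1/2) ^ n * (FF ((-1)^n) \<psi> False True True (sk n (b \<union> x1)) *
       cnj (FF ((-1)^n) \<psi> (b' = B - b) (b' = b) True (sk n (b' \<union> x1))))"
    unfolding h_def EE_mult ins sk_insQA using ev od ev' od' qa by (simp add: ins)
  show ?thesis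
    unfolding rho sumT sum4 h1 h2 h3 h4 by (simp only: distrib_left x0_def x1_def)
qed



lemma prod_sg_card: "finite I \<Longrightarrow> (\<Prod>i\<in>I. sg (P i)) = (-1) ^ card {i\<in>I. P i}"
  unfolding sg_def by (simp add: prod.If_cases Int_def conj_commute)

definition bq :: "qubit set \<Rightarrow> nat \<Rightarrow> qubit" where
  "bq B i = (if QS i \<in> B then QS i else QN i)"
fun idx :: "qubit \<Rightarrow> nat" where
  "idx QA = 0" | "idx (QS i) = i" | "idx (QN i) = i"

lemma prod_B_reindex:
  assumes op: "opp n B"
  shows "(\<Prod>q\<in>B. g q) = (\<Prod>i\<in>{1..n}. g (bq B i))"
proof (rule prod.reindex_bij_witness[of B "bq B" idx "{1..n}" "\<lambda>i. g (bq B i)" g])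
  fix q assume q: "q \<in> B"
  have qR: "q \<in> Rn n" using q op unfolding opp_def by blast
  then obtain i where i: "i \<in> {1..n}" "q = QS i \<or> q = QN i" unfolding Rn_def by blast
  show "bq B (idx q) = q" using i q op unfolding bq_def opp_def by auto
  show "idx q \<in> {1..n}" using i by auto
  show "g (bq B (idx q)) = g q" using i q op unfolding bq_def opp_def by auto
next
  fix i assume i: "i \<in> {1..n}"
  show "idx (bq B i) = i" unfolding bq_def by simp
  show "bq B i \<in> B" using i op unfolding bq_def opp_def by auto
qed

lemma finite_Rn: "finite (Rn n)" by (simp add: Rn_def)

lemma Yprod_zero:
  assumes op: "opp n B" and "q \<in> B" "(q \<in> b) = (q \<in> b')"
  shows "pauli_prod B (\<lambda>_. 2) b b' = 0"
proof -
  have fin: "finite B" using op finite_Rn unfolding opp_def by (meson finite_subset)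
  have "pauli 2 (q \<in> b) (q \<in> b') = 0" using assms(3) by (simp add: pauli_def)
  thus ?thesis unfolding pauli_prod_def using fin assms(2) by (metis prod_zero)
qed

lemma Yprod_compl:
  assumes op: "opp n B" and cB: "card B = n" and b: "b \<subseteq> B"
  shows "pauli_prod B (\<lambda>_. 2) b (B - b) = (- \<i>) ^ n * sk n (b \<union> c0 n B b)"
proof -
  have fin: "finite B" using op finite_Rn unfolding opp_def by (meson finite_subset)
  have "pauli_prod B (\<lambda>_. 2) b (B - b) = (\<Prod>q\<in>B. (- \<i>) * sg (q \<in> b))"
    unfolding pauli_prod_def by (rule prod.cong) (auto simp: pauli_def sg_def)
  also have "\<dots> = (- \<i>) ^ n * (\<Prod>q\<in>B. sg (q \<in> b))"
    by (simp only: prod.distrib prod_constant cB)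
  also have "(\<Prod>q\<in>B. sg (q \<in> b)) = (\<Prod>i\<in>{1..n}. sg (bq B i \<in> b))"
    by (rule prod_B_reindex[OF op])
  also have "\<dots> = sk n (b \<union> c0 n B b)"
    unfolding sk_def
  proof (rule prod.cong[OF refl])
    fix i assume i: "i \<in> {1..n}"
    show "sg (bq B i \<in> b) = sg (QS i \<in> b \<union> c0 n B b)"
    proof (cases "QS i \<in> B")
      case True
      hence "QS i \<notin> c0 n B b" unfolding c0_def by auto
      thus ?thesis using True unfolding bq_def by auto
    next
      case False
      hence QN: "QN i \<in> B" using op i unfolding opp_def by auto
      have "QS i \<in> c0 n B b \<longleftrightarrow> QN i \<in> b"
        using c0_mem[OF op QN, of b] by simp
      moreover have "QS i \<notin> b" using False b by auto
      ultimately show ?thesis using False unfolding bq_def by auto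
    qed
  qed
  finally show ?thesis .
qed

lemma skrel1:
  assumes b: "b \<subseteq> B" and x: "x \<subseteq> Qall n - B"
  shows "sk n (b \<union> x) * sk n ((B - b) \<union> x) = (\<Prod>i\<in>{1..n}. sg (QS i \<in> B))"
  unfolding sk_mult using b x by (intro prod.cong) (auto simp: sg_def)

lemma skrel2:
  assumes op: "opp n B" and b: "b \<subseteq> B"
  shows "sk n (b \<union> c0 n B b) * sk n (b \<union> c1 n B b) = (-1) ^ n * (\<Prod>i\<in>{1..n}. sg (QS i \<in> B))"
proof -
  have "sk n (b \<union> c0 n B b) * sk n (b \<union> c1 n B b) = (\<Prod>i\<in>{1..n}. (-1) * sg (QS i \<in> B))"
    unfolding sk_mult
  proof (rule prod.cong[OF refl])
    fix i assume i: "i \<in> {1..n}"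
    show "sg ((QS i \<in> b \<union> c0 n B b) \<noteq> (QS i \<in> b \<union> c1 n B b)) = (-1) * sg (QS i \<in> B)"
    proof (cases "QS i \<in> B")
      case True
      hence "QS i \<notin> c0 n B b" "QS i \<notin> c1 n B b" unfolding c0_def c1_def by auto
      thus ?thesis using True by (simp add: sg_def)
    next
      case False
      hence QN: "QN i \<in> B" using op i unfolding opp_def by auto
      have "QS i \<in> c0 n B b \<longleftrightarrow> QN i \<in> b" "QS i \<in> c1 n B b \<longleftrightarrow> QN i \<notin> b"
        using c0_mem[OF op QN, of b] c1_mem[OF op QN, of b] by simp_all
      moreover have "QS i \<notin> b" using False b by auto
      ultimately show ?thesis using False by (simp add: sg_def)
    qed
  qed
  also have "\<dots> = (-1) ^ n * (\<Prod>i\<in>{1..n}. sg (QS i \<in> B))"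
    by (simp only: prod.distrib prod_constant card_atLeastAtMost diff_Suc_1)
  finally show ?thesis .
qed

lemma bloch_y_eq: "bloch_y \<psi> = \<i> * (\<psi> False * cnj (\<psi> True) - cnj (\<psi> False) * \<psi> True)"
  unfolding bloch_y_def by (simp add: UNIV_bool pauli_def algebra_simps)

lemma FF_ff: "FF N \<psi> False False a u = 0" by (simp add: FF_def)



lemma odd_phase:
  assumes "odd n"
  shows "(-1::complex) ^ ((n - 1) div 2) * \<i> * (- \<i>) ^ n = 1"
proof -
  obtain m where m: "n = 2 * m + 1" using assms oddE by blast
  have "(- \<i>) ^ n = ((- \<i>) ^ 2) ^ m * (- \<i>)" unfolding m by (simp add: power_mult power_add)
  also have "\<dots> = (-1) ^ m * (- \<i>)" by (simp add: power2_eq_square)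
  finally have e: "(- \<i>) ^ n = (-1) ^ m * (- \<i>)" .
  have "(n - 1) div 2 = m" using m by simp
  hence "(-1::complex) ^ ((n - 1) div 2) * \<i> * (- \<i>) ^ n = ((-1) ^ m * (-1) ^ m) * (\<i> * (- \<i>))"
    using e by (simp add: algebra_simps)
  also have "\<dots> = 1" by (simp add: power_add[symmetric] flip: power_add)
  finally show ?thesis .
qed

lemma opp_formula:
  assumes n: "n \<ge> 1" and op: "opp n B" and cB: "card B = n" and b: "b \<subseteq> B" and b': "b' \<subseteq> B"
    and psi: "pure_qubit \<psi>"
  shows "rho_B n B \<psi> b b' = (1 / 2 ^ n) * ((if b = b' then 1 else 0)
      + (if odd n \<and> odd (card {i\<in>{1..n}. QS i \<in> B}) then (-1) ^ ((n - 1) div 2) else 0)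
        * bloch_y \<psi> * pauli_prod B (\<lambda>_. 2) b b')"
proof -
  define N :: complex where "N = (-1) ^ n"
  define P where "P = (\<Prod>i\<in>{1..n}. sg (QS i \<in> B))"
  define p where "p = card {i\<in>{1..n}. QS i \<in> B}"
  define u where "u = sk n (b \<union> c0 n B b)"
  define v where "v = sk n (b \<union> c1 n B b)"
  have Pp: "P = (-1) ^ p" unfolding P_def p_def by (rule prod_sg_card) simp
  have Bne: "B \<noteq> {}" using B_ne[OF op n] .
  then obtain q0 where q0: "q0 \<in> B" by blast
  have bne: "b \<noteq> B - b" using q0 by blast
  have pure: "\<psi> False * cnj (\<psi> True) * 0 = 0" by simp
  consider "b' = b" | "b' = B - b" | "b' \<noteq> b" "b' \<noteq> B - b" by blast
  thus ?thesis
  proof cases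
    case 1
    have "rho_B n B \<psi> b b' = (1/4) * (1/2) ^ n * 4"
      using opp_rho[OF n op b b', of \<psi>] 1 bne
      by (simp add: key_iii[OF sk_pm sk_pm neg1_pow pure_eq[OF psi]])
    moreover have "pauli_prod B (\<lambda>_. 2) b b' = 0" using Yprod_zero[OF op q0] 1 by simp
    ultimately show ?thesis using 1 by (simp add: power_one_over)
  next
    case 2
    have uu: "u * u = 1" "v * v = 1" unfolding u_def v_def by (rule sk_sq)+
    have Bb: "B - b \<subseteq> B" by blast
    have r1: "u * sk n ((B - b) \<union> c0 n B b) = P"
      using skrel1[OF b, of "c0 n B b" n] c0_sub unfolding u_def P_def by blast
    have u': "sk n ((B - b) \<union> c0 n B b) = u * P"
      using sk_pm_mult[OF uu(1) r1] by simp
    have r3: "u * v = N * P" using skrel2[OF op b] unfolding u_def v_def N_def P_def .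
    have v: "v = u * N * P"
      using sk_pm_mult[OF uu(1) r3] by (simp add: mult.assoc)
    have r2: "v * sk n ((B - b) \<union> c1 n B b) = P"
      using skrel1[OF b, of "c1 n B b" n] c1_sub unfolding v_def P_def by blast
    have v': "sk n ((B - b) \<union> c1 n B b) = u * N * P * P"
      using sk_pm_mult[OF uu(2) r2] v by simp
    have R: "rho_B n B \<psi> b (B - b) = (1/4) * (1/2) ^ n * (
     FF N \<psi> True False False u * cnj (FF N \<psi> False True False (u*P))
   + FF N \<psi> True False True u * cnj (FF N \<psi> False True True (u*P))
   + FF N \<psi> False True False (u*N*P) * cnj (FF N \<psi> True False False (u*N*P*P))
   + FF N \<psi> False True True (u*N*P) * cnj (FF N \<psi> True False True (u*N*P*P)))"
      using opp_rho[OF n op b Bb, of \<psi>] bne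
      unfolding u' v' N_def[symmetric] u_def[symmetric] v_def[symmetric] v
      by simp
    have PP: "P = 1 \<or> P = -1" unfolding P_def using sk_pm[of n B] unfolding sk_def .
    have rho2: "rho_B n B \<psi> b b' = (1/4) * (1/2) ^ n * ((1 - N) * (1 - P) * u * (\<psi> False * cnj (\<psi> True) - \<psi> True * cnj (\<psi> False)))"
      unfolding 2 R
      by (subst key_ii[OF sk_pm[of n "b \<union> c0 n B b", folded u_def] neg1_pow[of n, folded N_def] PP]) simp
    have Y: "pauli_prod B (\<lambda>_. 2) b b' = (- \<i>) ^ n * u"
      unfolding 2 u_def by (rule Yprod_compl[OF op cB b])
    show ?thesis
    proof (cases "odd n \<and> odd p")
      case True
      have N1: "N = -1" using True unfolding N_def by simp
      have P1: "P = -1" using True Pp by simp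
      have "(-1) ^ ((n - 1) div 2) * bloch_y \<psi> * pauli_prod B (\<lambda>_. 2) b b'
          = ((-1) ^ ((n - 1) div 2) * \<i> * (- \<i>) ^ n) * (u * (\<psi> False * cnj (\<psi> True) - \<psi> True * cnj (\<psi> False)))"
        unfolding Y bloch_y_eq by (simp add: algebra_simps)
      also have "\<dots> = u * (\<psi> False * cnj (\<psi> True) - \<psi> True * cnj (\<psi> False))"
        using odd_phase True by simp
      finally have e: "(-1) ^ ((n - 1) div 2) * bloch_y \<psi> * pauli_prod B (\<lambda>_. 2) b b'
          = u * (\<psi> False * cnj (\<psi> True) - \<psi> True * cnj (\<psi> False))" .
      show ?thesis unfolding p_def[symmetric] rho2 N1 P1 using True bne e 2
        by (simp add: power_one_over)
    next
      case False
      have "(1 - N) * (1 - P) = 0"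
        using False unfolding N_def Pp by auto
      hence "rho_B n B \<psi> b b' = 0" unfolding rho2 by simp
      thus ?thesis using False bne 2 unfolding p_def[symmetric] by auto
    qed
  next
    case 3
    have "rho_B n B \<psi> b b' = 0"
      using opp_rho[OF n op b b', of \<psi>] 3 by (simp add: FF_ff)
    moreover obtain q where q: "q \<in> B" "(q \<in> b) = (q \<in> b')" using 3 b b' by blast
    ultimately show ?thesis using Yprod_zero[OF op q] 3 by simp
  qed
qed



lemma card_B_split:
  assumes "B \<subseteq> Rn n"
  shows "card B = card {i\<in>{1..n}. QS i \<in> B} + card {i\<in>{1..n}. QN i \<in> B}"
proof -
  have e: "B = QS ` {i\<in>{1..n}. QS i \<in> B} \<union> QN ` {i\<in>{1..n}. QN i \<in> B}"
    using assms unfolding Rn_def by auto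
  have "card B = card (QS ` {i\<in>{1..n}. QS i \<in> B}) + card (QN ` {i\<in>{1..n}. QN i \<in> B})"
    by (subst e, rule card_Un_disjoint) auto
  also have "\<dots> = card {i\<in>{1..n}. QS i \<in> B} + card {i\<in>{1..n}. QN i \<in> B}"
    by (simp add: card_image inj_on_def)
  finally show ?thesis .
qed

lemma card_B_cover:
  assumes "B \<subseteq> Rn n" and cov: "\<forall>i\<in>{1..n}. QS i \<in> B \<or> QN i \<in> B"
  shows "card B = n + card {i\<in>{1..n}. QS i \<in> B \<and> QN i \<in> B}"
proof -
  let ?X = "{i\<in>{1..n}. QS i \<in> B}" and ?Y = "{i\<in>{1..n}. QN i \<in> B}"
  have u: "?X \<union> ?Y = {1..n}" using cov by auto
  have i: "?X \<inter> ?Y = {i\<in>{1..n}. QS i \<in> B \<and> QN i \<in> B}" by auto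
  have "card ?X + card ?Y = card (?X \<union> ?Y) + card (?X \<inter> ?Y)"
    by (rule card_Un_Int) auto
  thus ?thesis using card_B_split[OF assms(1)] u i by simp
qed

lemma rho_indep_i:
  assumes "n \<ge> 1" "B \<subseteq> Rn n" "\<exists>i\<in>{1..n}. QS i \<notin> B \<and> QN i \<notin> B"
  shows "uninformative n B"
  unfolding uninformative_def
proof (intro allI impI)
  fix \<psi>1 \<psi>2 b b'
  assume p1: "pure_qubit \<psi>1" and p2: "pure_qubit \<psi>2" and bb: "b \<subseteq> B" "b' \<subseteq> B"
  obtain j where j: "j \<in> {1..n}" "QS j \<notin> B" "QN j \<notin> B" using assms(3) by blast
  show "rho_B n B \<psi>1 b b' = rho_B n B \<psi>2 b b'"
  proof -
    show ?thesis by (simp only: part_i[OF assms(1,2) j p1 bb] part_i[OF assms(1,2) j p2 bb])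
  qed
qed

definition psi1 :: "bool \<Rightarrow> complex" where "psi1 a = (if a then \<i> * rr else rr)"
definition psi0 :: "bool \<Rightarrow> complex" where "psi0 a = (if a then 0 else 1)"

lemma cmod_rr: "(cmod rr)\<^sup>2 = 1/2"
  by (simp add: rr_def norm_divide power_divide)

lemma pure_psi1: "pure_qubit psi1"
  unfolding pure_qubit_def psi1_def by (simp add: norm_mult cmod_rr)
lemma pure_psi0: "pure_qubit psi0"
  unfolding pure_qubit_def psi0_def by simp
lemma y_psi1: "bloch_y psi1 = 1"
  unfolding bloch_y_eq psi1_def by (simp add: cnj_rr algebra_simps) (simp add: mult.assoc[symmetric] rr_sq)
lemma y_psi0: "bloch_y psi0 = 0"
  unfolding bloch_y_eq psi0_def by simp



lemma unif_from:
  assumes "\<And>\<psi> b b'. pure_qubit \<psi> \<Longrightarrow> b \<subseteq> B \<Longrightarrow> b' \<subseteq> B \<Longrightarrow> rho_B n B \<psi> b b' = f b b'"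
  shows "uninformative n B"
  unfolding uninformative_def using assms by simp

theorem proposition2:
  fixes n :: nat and B :: "qubit set"
  assumes "n \<ge> 1" and "B \<subseteq> Rn n"
  shows "((\<exists>i\<in>{1..n}. QS i \<notin> B \<and> QN i \<notin> B) \<longrightarrow> uninformative n B)
    \<and> ((\<forall>i\<in>{1..n}. QS i \<in> B \<or> QN i \<in> B) \<longrightarrow>
         (card B > n \<longrightarrow> authorized n B)
       \<and> (card B = n \<longrightarrow>
            (let p = card {i\<in>{1..n}. QS i \<in> B} in
              (even n \<longrightarrow> uninformative n B)
            \<and> (odd n \<and> even p \<longrightarrow> uninformative n B)
            \<and> (odd n \<and> odd p \<longrightarrow> partially_informative n B
                 \<and> (\<forall>\<psi>. pure_qubit \<psi> \<longrightarrow> (\<forall>b\<subseteq>B. \<forall>b'\<subseteq>B.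
                      rho_B n B \<psi> b b' =
                        (1 / 2 ^ n) * ((if b = b' then 1 else 0)
                          + (-1) ^ ((n - 1) div 2) * bloch_y \<psi> * pauli_prod B (\<lambda>_. 2) b b')))))))"
proof (intro conjI impI)
  show "uninformative n B" if "\<exists>i\<in>{1..n}. QS i \<notin> B \<and> QN i \<notin> B"
    using rho_indep_i[OF assms that] .
next
  assume cov: "\<forall>i\<in>{1..n}. QS i \<in> B \<or> QN i \<in> B"
  define Z where "Z = {i\<in>{1..n}. QS i \<in> B \<and> QN i \<in> B}"
  have cB: "card B = n + card Z" unfolding Z_def by (rule card_B_cover[OF assms(2) cov])
  {
    assume "card B > n"
    hence "Z \<noteq> {}" using cB by auto
    then obtain j where "j \<in> Z" by blast
    thus "authorized n B" using cov unfolding authorized_def Z_def by blast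
  }
  assume cn: "card B = n"
  hence "card Z = 0" using cB by simp
  hence Z0: "Z = {}" unfolding Z_def by simp
  have op: "opp n B" unfolding opp_def using assms(2) cov Z0 unfolding Z_def by blast
  define p where "p = card {i\<in>{1..n}. QS i \<in> B}"
  have F: "\<And>\<psi> b b'. pure_qubit \<psi> \<Longrightarrow> b \<subseteq> B \<Longrightarrow> b' \<subseteq> B \<Longrightarrow> rho_B n B \<psi> b b' =
      (1 / 2 ^ n) * ((if b = b' then 1 else 0)
      + (if odd n \<and> odd p then (-1) ^ ((n - 1) div 2) else 0) * bloch_y \<psi> * pauli_prod B (\<lambda>_. 2) b b')"
    unfolding p_def using opp_formula[OF assms(1) op cn] by blast
  have U: "uninformative n B" if "\<not> (odd n \<and> odd p)"
    by (rule unif_from[where f = "\<lambda>b b'. (1 / 2 ^ n) * (if b = b' then 1 else 0)"]) (simp add: F that)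
  have PI: "partially_informative n B" if odd: "odd n \<and> odd p"
  proof -
    have na: "\<not> authorized n B" using op unfolding authorized_def opp_def by blast
    have Bne: "{} \<noteq> B" using B_ne[OF op assms(1)] by blast
    define \<gamma> :: complex where "\<gamma> = (-1) ^ ((n - 1) div 2)"
    have g0: "\<gamma> \<noteq> 0" unfolding \<gamma>_def by simp
    have Y: "pauli_prod B (\<lambda>_. 2) {} B = (- \<i>) ^ n * sk n ({} \<union> c0 n B {})"
      using Yprod_compl[OF op cn, of "{}"] by simp
    have Y0: "pauli_prod B (\<lambda>_. 2) {} B \<noteq> 0"
      unfolding Y using sk_pm[of n "{} \<union> c0 n B {}"] by auto
    have r1: "rho_B n B psi1 {} B = (1 / 2 ^ n) * (\<gamma> * pauli_prod B (\<lambda>_. 2) {} B)"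
      using F[OF pure_psi1, of "{}" B] odd Bne y_psi1 unfolding \<gamma>_def by simp
    have r0: "rho_B n B psi0 {} B = 0"
      using F[OF pure_psi0, of "{}" B] odd Bne y_psi0 by simp
    have "rho_B n B psi1 {} B \<noteq> rho_B n B psi0 {} B"
      unfolding r1 r0 using g0 Y0 by simp
    hence "\<not> uninformative n B"
      unfolding uninformative_def using pure_psi1 pure_psi0 by blast
    thus ?thesis using na unfolding partially_informative_def by blast
  qed
  show "let p = card {i\<in>{1..n}. QS i \<in> B} in
              (even n \<longrightarrow> uninformative n B)
            \<and> (odd n \<and> even p \<longrightarrow> uninformative n B)
            \<and> (odd n \<and> odd p \<longrightarrow> partially_informative n B
                 \<and> (\<forall>\<psi>. pure_qubit \<psi> \<longrightarrow> (\<forall>b\<subseteq>B. \<forall>b'\<subseteq>B.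
                      rho_B n B \<psi> b b' =
                        (1 / 2 ^ n) * ((if b = b' then 1 else 0)
                          + (-1) ^ ((n - 1) div 2) * bloch_y \<psi> * pauli_prod B (\<lambda>_. 2) b b'))))"
    unfolding Let_def p_def[symmetric]
    using U PI F by auto
qed


end
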